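(* Let $m-n=1$, let $\gamma_1,\ldots,\gamma_m,\delta\in\mathbb R$ satisfy the conditions below, and suppose $\mathcal R=\{\mathbf u\in\mathbb R^m\colon\gamma_1u_1^2+\cdots+\gamma_mu_m^2=\delta\}$ is compact (so $\mathcal R\cong S^{m-1}$ and $N\cong S^{m-1}\times_{\mathbb Z_2}S^1$). Then the immersion $i\colon N\to\mathbb C^m$ is an embedding (of an $H$-minimal Lagrangian submanifold) if and only if $\gamma_1=\cdots=\gamma_m$. In this case the topological type of $N=N(m)$ depends only on the parity of $m$: $N(m)\cong S^{m-1}\times S^1$ if $m$ is even, and $N(m)\cong\mathcal K^m$ if $m$ is odd.
   Context: Conditions: $\delta\in\mathbb R_\ge\langle\gamma_1,\ldots,\gamma_m\rangle$; $\delta$ lies in no cone generated by fewer than one $\gamma_k$ (i.e. $\delta\ne0$ when expressed through an empty set); the $\gamma_k$ generate a lattice $L\cong\mathbb Z$. $L^*$ is the dual lattice, $T_\Gamma=\mathbb R/L^*$ acting on $\mathbb C^m$ by $\varphi\cdot\mathbf z=(e^{2\pi i\gamma_k\varphi}z_k)_k$, $D_\Gamma=\tfrac12L^*/L^*\cong\mathbb Z_2$, $N=\mathcal R\times_{D_\Gamma}T_\Gamma$ (quotient by the diagonal action), and $i[\mathbf u,\varphi]=\varphi\cdot\mathbf u$. $H$-minimal Lagrangian: the symplectic form of $\mathbb C^m$ restricts to zero and the first variation of volume along all compactly supported Hamiltonian vector fields vanishes. $\mathcal K^m$ denotes the $m$-dimensional Klein bottle, the mapping torus of an orientation-reversing isometry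 (e.g. a reflection) of $S^{m-1}$. *)

theory Defs
  imports "HOL-Analysis.Analysis"
begin

(* Quotient topology of X by a relation r (intended: an equivalence relation on topspace X). *)
definition eq_class :: "'a topology \<Rightarrow> ('a \<Rightarrow> 'a \<Rightarrow> bool) \<Rightarrow> 'a \<Rightarrow> 'a set" where
  "eq_class X r x = {y \<in> topspace X. r x y}"

definition quotient_topology :: "'a topology \<Rightarrow> ('a \<Rightarrow> 'a \<Rightarrow> bool) \<Rightarrow> 'a set topology" where
  "quotient_topology X r = topology (\<lambda>U. U \<subseteq> eq_class X r ` topspace X \<and>
      openin X {x \<in> topspace X. eq_class X r x \<in> U})"

definition mapping_torus :: "'a topology \<Rightarrow> ('a \<Rightarrow> 'a) \<Rightarrow> ('a \<times> real) set topology" where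
  "mapping_torus X f = quotient_topology (prod_topology X (top_of_set {0..1}))
     (\<lambda>(x,t) (y,s). (x,t) = (y,s) \<or> (t = 0 \<and> s = 1 \<and> y = f x) \<or> (t = 1 \<and> s = 0 \<and> x = f y))"

(* The m-dimensional Klein bottle K^m (m = CARD('m)): mapping torus of a reflection of S^{m-1}. *)
definition reflection_map :: "real^'m \<Rightarrow> real^'m" where
  "reflection_map x = (let a = axis (SOME k. True) 1 in x - (2 * (x \<bullet> a)) *\<^sub>R a)"

definition klein_bottle :: "((real^'m) \<times> real) set topology" where
  "klein_bottle = mapping_torus (top_of_set (sphere 0 1 :: (real^'m) set)) reflection_map"

(* Lattice L generated by gamma_1..gamma_m (here gamma_k \<in> \<real>, since m - n = 1) *)
definition gen_lattice :: "real^'m \<Rightarrow> real set" where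
  "gen_lattice \<gamma> = range (\<lambda>c::'m \<Rightarrow> int. \<Sum>k\<in>UNIV. of_int (c k) * \<gamma>$k)"

definition dual_lattice :: "real set \<Rightarrow> real set" where
  "dual_lattice L = {\<phi>. \<forall>g\<in>L. g * \<phi> \<in> \<int>}"

definition torus_act :: "real^'m \<Rightarrow> real \<Rightarrow> real^'m \<Rightarrow> complex^'m" where
  "torus_act \<gamma> \<phi> u = (\<chi> k. cis (2 * pi * \<gamma>$k * \<phi>) * complex_of_real (u$k))"

definition R_set :: "real^'m \<Rightarrow> real \<Rightarrow> (real^'m) set" where
  "R_set \<gamma> \<delta> = {u. (\<Sum>k\<in>UNIV. \<gamma>$k * (u$k)^2) = \<delta>}"

(* N = R \<times>_{D} T, realised as (R \<times> \<real>)/(\<frac>12 L^* ) with \<psi>\<cdot>(u,\<phi>) = (\<psi>\<cdot>u, \<phi>+\<psi>);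
   this is the quotient of R \<times> T_\<Gamma> (T_\<Gamma> = \<real>/L^* ) by the diagonal action of D_\<Gamma> = \<frac>12 L^*/L^* . *)
definition N_rel :: "real^'m \<Rightarrow> ((real^'m) \<times> real) \<Rightarrow> ((real^'m) \<times> real) \<Rightarrow> bool" where
  "N_rel \<gamma> = (\<lambda>(u,\<phi>) (u',\<phi>'). \<exists>\<psi>. 2 * \<psi> \<in> dual_lattice (gen_lattice \<gamma>) \<and>
       (\<chi> k. complex_of_real (u'$k)) = torus_act \<gamma> \<psi> u \<and> \<phi>' = \<phi> + \<psi>)"

definition N_top :: "real^'m \<Rightarrow> real \<Rightarrow> ((real^'m) \<times> real) set topology" where
  "N_top \<gamma> \<delta> = quotient_topology (prod_topology (top_of_set (R_set \<gamma> \<delta>)) euclideanreal) (N_rel \<gamma>)"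

definition N_imm :: "real^'m \<Rightarrow> ((real^'m) \<times> real) set \<Rightarrow> complex^'m" where
  "N_imm \<gamma> c = (let p = (SOME p. p \<in> c) in torus_act \<gamma> (snd p) (fst p))"

end

theory Submission
  imports Defs
begin


lemma istopology_quot:
  "istopology (\<lambda>U. U \<subseteq> eq_class X r ` topspace X \<and> openin X {x \<in> topspace X. eq_class X r x \<in> U})"
proof -
  have 1: "\<forall>S T. (S \<subseteq> eq_class X r ` topspace X \<and> openin X {x \<in> topspace X. eq_class X r x \<in> S}) \<longrightarrow>
    (T \<subseteq> eq_class X r ` topspace X \<and> openin X {x \<in> topspace X. eq_class X r x \<in> T}) \<longrightarrow>
    (S \<inter> T \<subseteq> eq_class X r ` topspace X \<and> openin X {x \<in> topspace X. eq_class X r x \<in> S \<inter> T})"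
  proof (intro allI impI)
    fix S T assume a: "S \<subseteq> eq_class X r ` topspace X \<and> openin X {x \<in> topspace X. eq_class X r x \<in> S}"
      "T \<subseteq> eq_class X r ` topspace X \<and> openin X {x \<in> topspace X. eq_class X r x \<in> T}"
    have e: "{x \<in> topspace X. eq_class X r x \<in> S \<inter> T} = {x \<in> topspace X. eq_class X r x \<in> S} \<inter> {x \<in> topspace X. eq_class X r x \<in> T}"
      by auto
    show "S \<inter> T \<subseteq> eq_class X r ` topspace X \<and> openin X {x \<in> topspace X. eq_class X r x \<in> S \<inter> T}"
      using a unfolding e by auto
  qed
  have 2: "\<forall>K. (\<forall>S\<in>K. S \<subseteq> eq_class X r ` topspace X \<and> openin X {x \<in> topspace X. eq_class X r x \<in> S}) \<longrightarrow>
     (\<Union>K \<subseteq> eq_class X r ` topspace X \<and> openin X {x \<in> topspace X. eq_class X r x \<in> \<Union>K})"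
  proof (intro allI impI)
    fix K assume K: "\<forall>S\<in>K. S \<subseteq> eq_class X r ` topspace X \<and> openin X {x \<in> topspace X. eq_class X r x \<in> S}"
    have "{x \<in> topspace X. eq_class X r x \<in> \<Union>K} = \<Union>((\<lambda>S. {x \<in> topspace X. eq_class X r x \<in> S}) ` K)"
      by auto
    moreover have "openin X (\<Union>((\<lambda>S. {x \<in> topspace X. eq_class X r x \<in> S}) ` K))"
      using K by (intro openin_Union) auto
    ultimately show "\<Union>K \<subseteq> eq_class X r ` topspace X \<and> openin X {x \<in> topspace X. eq_class X r x \<in> \<Union>K}"
      using K by auto
  qed
  show ?thesis unfolding istopology_def using 1 2 by blast
qed

lemma openin_quot:
  "openin (quotient_topology X r) U \<longleftrightarrow> U \<subseteq> eq_class X r ` topspace X \<and> openin X {x \<in> topspace X. eq_class X r x \<in> U}"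
  unfolding quotient_topology_def topology_inverse'[OF istopology_quot] ..

lemma topspace_quot: "topspace (quotient_topology X r) = eq_class X r ` topspace X"
proof -
  have e: "{x \<in> topspace X. eq_class X r x \<in> eq_class X r ` topspace X} = topspace X" by blast
  have "openin (quotient_topology X r) (eq_class X r ` topspace X)"
    unfolding openin_quot e by simp
  then have "eq_class X r ` topspace X \<subseteq> topspace (quotient_topology X r)"
    by (rule openin_subset)
  moreover have "topspace (quotient_topology X r) \<subseteq> eq_class X r ` topspace X"
    using openin_quot[of X r "topspace (quotient_topology X r)"] by simp
  ultimately show ?thesis by blast
qed

lemma continuous_map_class: "continuous_map X (quotient_topology X r) (eq_class X r)"
  unfolding continuous_map_def topspace_quot openin_quot by auto

definition lift :: "('a \<Rightarrow> 'b) \<Rightarrow> 'a set \<Rightarrow> 'b" where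
  "lift g c = g (SOME p. p \<in> c)"

lemma lift_class:
  assumes "x \<in> topspace X" "r x x" "\<And>y. y \<in> topspace X \<Longrightarrow> r x y \<Longrightarrow> g y = g x"
  shows "lift g (eq_class X r x) = g x"
proof -
  have "x \<in> eq_class X r x" using assms by (simp add: eq_class_def)
  then have "(SOME p. p \<in> eq_class X r x) \<in> eq_class X r x" by (rule someI)
  then show ?thesis unfolding lift_def using assms(3) by (simp add: eq_class_def)
qed

lemma continuous_map_lift:
  assumes g: "continuous_map X Y g"
    and refl: "\<And>x. x \<in> topspace X \<Longrightarrow> r x x"
    and resp: "\<And>x y. x \<in> topspace X \<Longrightarrow> y \<in> topspace X \<Longrightarrow> r x y \<Longrightarrow> g y = g x"
  shows "continuous_map (quotient_topology X r) Y (lift g)"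
  unfolding continuous_map_def topspace_quot openin_quot
proof (intro conjI allI impI)
  have lc: "\<And>x. x \<in> topspace X \<Longrightarrow> lift g (eq_class X r x) = g x"
    using lift_class refl resp by metis
  show "lift g \<in> eq_class X r ` topspace X \<rightarrow> topspace Y"
  proof
    fix c assume "c \<in> eq_class X r ` topspace X"
    then obtain x where x: "x \<in> topspace X" "c = eq_class X r x" by blast
    show "lift g c \<in> topspace Y" using lc[OF x(1)] x continuous_map_image_subset_topspace[OF g] by auto
  qed
  fix U assume U: "openin Y U"
  have "{x \<in> topspace X. eq_class X r x \<in> {x \<in> eq_class X r ` topspace X. lift g x \<in> U}}
        = {x \<in> topspace X. g x \<in> U}" (is "?A = ?B") using lc by auto
  moreover have "openin X ?B" using openin_continuous_map_preimage[OF g U] .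
  ultimately show "openin X ?A" by simp
qed blast

lemma eq_class_eq:
  assumes sym: "\<And>x y. x \<in> topspace X \<Longrightarrow> y \<in> topspace X \<Longrightarrow> r x y \<Longrightarrow> r y x"
    and trans: "\<And>x y z. x \<in> topspace X \<Longrightarrow> y \<in> topspace X \<Longrightarrow> z \<in> topspace X \<Longrightarrow> r x y \<Longrightarrow> r y z \<Longrightarrow> r x z"
    and "x \<in> topspace X" "y \<in> topspace X" "r x y"
  shows "eq_class X r x = eq_class X r y"
proof -
  have "r y x" using sym assms by blast
  show ?thesis unfolding eq_class_def
  proof (intro Collect_cong conj_cong refl iffI)
    fix z assume "z \<in> topspace X" "r x z" then show "r y z" using trans[of y x z] \<open>r y x\<close> assms by blast
  next
    fix z assume "z \<in> topspace X" "r y z" then show "r x z" using trans[of x y z] assms by blast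
  qed
qed

lemma compact_space_quot:
  assumes "compactin X S" "\<And>x. x \<in> topspace X \<Longrightarrow> \<exists>y\<in>S. eq_class X r y = eq_class X r x"
  shows "compact_space (quotient_topology X r)"
proof -
  have "compactin (quotient_topology X r) (eq_class X r ` S)"
    using image_compactin[OF assms(1) continuous_map_class] .
  moreover have "eq_class X r ` S = topspace (quotient_topology X r)"
  proof
    show "eq_class X r ` S \<subseteq> topspace (quotient_topology X r)"
      using compactin_subset_topspace[OF assms(1)] unfolding topspace_quot by blast
    show "topspace (quotient_topology X r) \<subseteq> eq_class X r ` S"
    proof
      fix c assume "c \<in> topspace (quotient_topology X r)"
      then obtain x where x: "x \<in> topspace X" "c = eq_class X r x" unfolding topspace_quot by blast
      obtain y where "y \<in> S" "eq_class X r y = eq_class X r x" using assms(2)[OF x(1)] by blast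
      then show "c \<in> eq_class X r ` S" using x by blast
    qed
  qed
  ultimately show ?thesis by (simp add: compact_space_def)
qed



lemma gen_lattice_mem: fixes \<gamma> :: "real^'m" shows "\<gamma>$k \<in> gen_lattice \<gamma>"
proof -
  have "(\<Sum>j\<in>UNIV. of_int ((\<lambda>j. if j = k then 1 else 0) j) * \<gamma>$j) = \<gamma>$k"
  proof -
    have "(\<Sum>j\<in>UNIV. of_int ((\<lambda>j. if j = k then 1 else 0) j) * \<gamma>$j) = (\<Sum>j\<in>UNIV. if j = k then \<gamma>$k else 0)"
      by (rule sum.cong) auto
    then show ?thesis by simp
  qed
  then show ?thesis unfolding gen_lattice_def by (intro range_eqI) (rule sym)
qed

lemma N_rel_refl: "N_rel \<gamma> p p"
proof -
  obtain u \<phi> where p: "p = (u, \<phi>)" by fastforce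
  have "2 * 0 \<in> dual_lattice (gen_lattice \<gamma>)" by (simp add: dual_lattice_def)
  moreover have "(\<chi> k. complex_of_real (u$k)) = torus_act \<gamma> 0 u"
    by (simp add: torus_act_def)
  ultimately show ?thesis unfolding p N_rel_def prod.case by (intro exI[of _ 0]) simp
qed

lemma torus_act_resp:
  assumes "N_rel \<gamma> (u,\<phi>) (u',\<phi>')"
  shows "torus_act \<gamma> \<phi>' u' = torus_act \<gamma> \<phi> u"
proof -
  obtain \<psi> where d: "2 * \<psi> \<in> dual_lattice (gen_lattice \<gamma>)"
    and e: "(\<chi> k. complex_of_real (u'$k)) = torus_act \<gamma> \<psi> u" and f: "\<phi>' = \<phi> + \<psi>"
    using assms unfolding N_rel_def by auto
  show ?thesis unfolding vec_eq_iff
  proof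
    fix k
    have ek: "complex_of_real (u'$k) = cis (2 * pi * \<gamma>$k * \<psi>) * complex_of_real (u$k)"
      using arg_cong[OF e, of "\<lambda>v. v$k"] by (simp add: torus_act_def)
    have "\<gamma>$k * (2 * \<psi>) \<in> \<int>" using d gen_lattice_mem[of \<gamma> k] unfolding dual_lattice_def by blast
    then have c1: "cis (2 * pi * (\<gamma>$k * (2 * \<psi>))) = 1" by (rule cis_multiple_2pi)
    have "torus_act \<gamma> \<phi>' u' $ k = cis (2 * pi * \<gamma>$k * \<phi>) * cis (2 * pi * (\<gamma>$k * (2 * \<psi>))) * complex_of_real (u$k)"
      unfolding torus_act_def f using ek by (simp add: cis_mult algebra_simps)
    then show "torus_act \<gamma> \<phi>' u' $ k = torus_act \<gamma> \<phi> u $ k"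
      using c1 by (simp add: torus_act_def)
  qed
qed

lemma sum_axis_sq: fixes \<gamma> :: "real^'m" shows "(\<Sum>i\<in>UNIV. \<gamma>$i * (axis k r $ i)^2) = \<gamma>$k * r^2"
proof -
  have "(\<Sum>i\<in>UNIV. \<gamma>$i * (axis k r $ i)^2) = (\<Sum>i\<in>UNIV. if i = k then \<gamma>$k * r^2 else 0)"
    by (rule sum.cong) (simp_all add: axis_def)
  then show ?thesis by simp
qed

lemma sign_lemma:
  fixes \<gamma> :: "real^'m"
  assumes cone: "\<exists>c::'m \<Rightarrow> real. (\<forall>k. c k \<ge> 0) \<and> \<delta> = (\<Sum>k\<in>UNIV. c k * \<gamma>$k)"
    and nondeg: "\<delta> \<noteq> 0"
    and cpt: "compact (R_set \<gamma> \<delta>)"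
  shows "\<gamma>$k * \<delta> > 0"
proof -
  obtain c :: "'m \<Rightarrow> real" where c: "\<forall>k. c k \<ge> 0" "\<delta> = (\<Sum>k\<in>UNIV. c k * \<gamma>$k)" using cone by blast
  obtain j where j: "\<gamma>$j * \<delta> > 0"
  proof (rule ccontr)
    assume "\<not> thesis"
    have "\<forall>j. \<gamma>$j * \<delta> \<le> 0"
    proof
      fix j show "\<gamma>$j * \<delta> \<le> 0" using that[of j] \<open>\<not> thesis\<close> by linarith
    qed
    then have "\<forall>j. c j * \<gamma>$j * \<delta> \<le> 0" using c(1) by (metis mult.assoc mult_nonneg_nonpos)
    then have "(\<Sum>k\<in>UNIV. c k * \<gamma>$k * \<delta>) \<le> 0" by (simp add: sum_nonpos)
    then have "\<delta> * \<delta> \<le> 0" using c(2) by (simp add: sum_distrib_right)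
    moreover have "\<delta> * \<delta> > 0" using nondeg by (simp add: zero_less_mult_iff) linarith
    ultimately show False by linarith
  qed
  show ?thesis
  proof (rule ccontr)
    assume k: "\<not> \<gamma>$k * \<delta> > 0"
    then have kj: "k \<noteq> j" using j by auto
    obtain B where B: "\<forall>u\<in>R_set \<gamma> \<delta>. norm u \<le> B"
      using compact_imp_bounded[OF cpt] bounded_iff by blast
    define t where "t = \<bar>B\<bar> + 1"
    define s where "s = sqrt ((\<delta> - \<gamma>$k * t^2) / \<gamma>$j)"
    have gj: "\<gamma>$j \<noteq> 0" using j by auto
    have nn: "(\<delta> - \<gamma>$k * t^2) / \<gamma>$j \<ge> 0"
    proof -
      have "(\<delta> - \<gamma>$k * t^2) / \<gamma>$j = ((\<delta> - \<gamma>$k * t^2) * \<delta>) / (\<gamma>$j * \<delta>)"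
        using nondeg by simp
      moreover have "(\<delta> - \<gamma>$k * t^2) * \<delta> \<ge> 0"
      proof -
        have "(\<delta> - \<gamma>$k * t^2) * \<delta> = \<delta> * \<delta> - (\<gamma>$k * \<delta>) * t^2" by (simp add: algebra_simps)
        moreover have "(\<gamma>$k * \<delta>) * t^2 \<le> 0" using k by (simp add: mult_nonpos_nonneg)
        moreover have "\<delta> * \<delta> \<ge> 0" by simp
        ultimately show ?thesis by linarith
      qed
      ultimately show ?thesis using j divide_nonneg_pos[of "(\<delta> - \<gamma>$k * t^2) * \<delta>" "\<gamma>$j * \<delta>"] by (simp only:)
    qed
    have s2: "\<gamma>$j * s^2 = \<delta> - \<gamma>$k * t^2" unfolding s_def using nn gj by simp
    define u where "u = axis k t + axis j s"
    have "(\<Sum>i\<in>UNIV. \<gamma>$i * (u$i)^2) = (\<Sum>i\<in>UNIV. \<gamma>$i * (axis k t $ i)^2 + \<gamma>$i * (axis j s $ i)^2)"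
      by (rule sum.cong) (use kj in \<open>auto simp: u_def axis_def power2_eq_square\<close>)
    also have "\<dots> = \<gamma>$k * t^2 + \<gamma>$j * s^2" by (simp add: sum.distrib sum_axis_sq)
    finally have "u \<in> R_set \<gamma> \<delta>" using s2 by (simp add: R_set_def)
    then have "norm u \<le> B" using B by blast
    moreover have "\<bar>u$k\<bar> \<le> norm u" by (rule component_le_norm_cart)
    moreover have "u$k = t" using kj by (simp add: u_def axis_def)
    ultimately show False unfolding t_def by linarith
  qed
qed



abbreviation NX :: "real^'m \<Rightarrow> real \<Rightarrow> ((real^'m) \<times> real) topology" where
  "NX \<gamma> \<delta> \<equiv> prod_topology (top_of_set (R_set \<gamma> \<delta>)) euclideanreal"

lemma topspace_NX: "topspace (NX \<gamma> \<delta>) = R_set \<gamma> \<delta> \<times> UNIV" by simp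

lemma N_imm_lift: "N_imm \<gamma> = lift (\<lambda>p. torus_act \<gamma> (snd p) (fst p))"
  by (simp add: fun_eq_iff N_imm_def lift_def Let_def)

lemma N_imm_class:
  assumes "p \<in> topspace (NX \<gamma> \<delta>)"
  shows "N_imm \<gamma> (eq_class (NX \<gamma> \<delta>) (N_rel \<gamma>) p) = torus_act \<gamma> (snd p) (fst p)"
  unfolding N_imm_lift
proof (rule lift_class[OF assms N_rel_refl])
  fix q assume "N_rel \<gamma> p q"
  then show "torus_act \<gamma> (snd q) (fst q) = torus_act \<gamma> (snd p) (fst p)"
    using torus_act_resp[of \<gamma> "fst p" "snd p" "fst q" "snd q"] by simp
qed

lemma not_int_inv:
  fixes n :: int and x :: real assumes "\<bar>n\<bar> \<ge> 2" "x * of_int n = -1" shows "x \<notin> \<int>"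
proof
  assume "x \<in> \<int>"
  then obtain m where m: "x = of_int m" by (auto elim: Ints_cases)
  then have "of_int (m * n) = (-1::real)" using assms(2) by simp
  then have "m * n = -1" by linarith
  then have "\<bar>m\<bar> * \<bar>n\<bar> = 1" by (metis abs_minus_cancel abs_mult abs_one)
  moreover have "m = 0 \<or> \<bar>m\<bar> \<ge> 1" by linarith
  moreover have "\<bar>m\<bar> \<ge> 1 \<Longrightarrow> \<bar>m\<bar> * \<bar>n\<bar> \<ge> 1 * 2"
    using assms(1) by (intro mult_mono) auto
  ultimately show False by auto
qed

lemma not_embedding:
  fixes \<gamma> :: "real^'m" and \<delta> :: real
  assumes cone: "\<exists>c::'m \<Rightarrow> real. (\<forall>k. c k \<ge> 0) \<and> \<delta> = (\<Sum>k\<in>UNIV. c k * \<gamma>$k)"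
    and nondeg: "\<delta> \<noteq> 0"
    and lattice: "\<exists>g. g \<noteq> 0 \<and> gen_lattice \<gamma> = range (\<lambda>j::int. of_int j * g)"
    and cpt: "compact (R_set \<gamma> \<delta>)"
    and neq: "\<not> (\<forall>k l. \<gamma>$k = \<gamma>$l)"
  shows "\<not> embedding_map (N_top \<gamma> \<delta>) (euclidean :: (complex^'m) topology) (N_imm \<gamma>)"
proof
  assume emb: "embedding_map (N_top \<gamma> \<delta>) (euclidean :: (complex^'m) topology) (N_imm \<gamma>)"
  obtain g where g: "g \<noteq> 0" "gen_lattice \<gamma> = range (\<lambda>j::int. of_int j * g)" using lattice by blast
  have sg: "\<And>k. \<gamma>$k * \<delta> > 0" using sign_lemma[OF cone nondeg cpt] .
  have "\<forall>k. \<exists>n::int. \<gamma>$k = of_int n * g" using gen_lattice_mem[of \<gamma>] unfolding g(2) by blast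
  then obtain n :: "'m \<Rightarrow> int" where n: "\<And>k. \<gamma>$k = of_int (n k) * g" by metis
  have n0: "n k \<noteq> 0" for k using sg[of k] n[of k] by auto
  obtain k where k: "\<bar>n k\<bar> \<ge> 2"
  proof (rule ccontr)
    assume "\<not> thesis"
    then have small: "\<bar>n k\<bar> \<le> 1" for k using that[of k] by linarith
    have "\<gamma>$k = \<gamma>$l" for k l
    proof (rule ccontr)
      assume ne: "\<gamma>$k \<noteq> \<gamma>$l"
      have "n k = 1 \<or> n k = -1" "n l = 1 \<or> n l = -1" using small[of k] small[of l] n0[of k] n0[of l] by linarith+
      then have "n k \<noteq> n l \<Longrightarrow> n l = - n k" by auto
      then have "\<gamma>$l = - \<gamma>$k" using ne n[of k] n[of l] by auto
      then show False using sg[of k] sg[of l] by simp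
    qed
    then show False using neq by blast
  qed
  have gk: "\<gamma>$k \<noteq> 0" using sg[of k] by auto
  define r where "r = sqrt (\<delta> / \<gamma>$k)"
  have dpos: "\<delta> / \<gamma>$k > 0" using sg[of k]
    by (metis divide_pos_pos mult_pos_pos nonzero_mult_div_cancel_left gk zero_less_divide_iff zero_less_mult_iff)
  have r2: "\<gamma>$k * r^2 = \<delta>" unfolding r_def using dpos gk by simp
  define \<phi>0 where "\<phi>0 = 1 / (2 * of_int (n k) * g)"
  define p1 where "p1 = (axis k r, \<phi>0)"
  define p2 where "p2 = (axis k (-r), 0::real)"
  have p1X: "p1 \<in> topspace (NX \<gamma> \<delta>)" unfolding p1_def topspace_NX R_set_def
    using sum_axis_sq[of \<gamma> k r] r2 by simp
  have p2X: "p2 \<in> topspace (NX \<gamma> \<delta>)" unfolding p2_def topspace_NX R_set_def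
    using sum_axis_sq[of \<gamma> k "-r"] r2 by simp
  have pi1: "2 * pi * \<gamma>$k * \<phi>0 = pi" unfolding \<phi>0_def n[of k] using g(1) n0[of k] by simp
  have cpi: "cis (2 * pi * \<gamma>$k * \<phi>0) = -1" by (subst pi1) simp
  have img: "torus_act \<gamma> (snd p1) (fst p1) = torus_act \<gamma> (snd p2) (fst p2)"
    unfolding vec_eq_iff
  proof
    fix i show "torus_act \<gamma> (snd p1) (fst p1) $ i = torus_act \<gamma> (snd p2) (fst p2) $ i"
      unfolding p1_def p2_def torus_act_def using cpi by (cases "i = k") (simp_all add: axis_def)
  qed
  have notrel: "\<not> N_rel \<gamma> p1 p2"
  proof
    assume "N_rel \<gamma> p1 p2"
    then obtain \<psi> where d: "2 * \<psi> \<in> dual_lattice (gen_lattice \<gamma>)" and e: "0 = \<phi>0 + \<psi>"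
      unfolding N_rel_def p1_def p2_def by auto
    have "g \<in> gen_lattice \<gamma>" unfolding g(2) by (rule range_eqI[of _ _ 1]) simp
    then have "g * (2 * \<psi>) \<in> \<int>" using d unfolding dual_lattice_def by blast
    moreover have "(g * (2 * \<psi>)) * of_int (n k) = -1" using e g(1) n0[of k] unfolding \<phi>0_def
      by (simp add: field_simps)
    ultimately show False using not_int_inv[OF k] by blast
  qed
  define c1 where "c1 = eq_class (NX \<gamma> \<delta>) (N_rel \<gamma>) p1"
  define c2 where "c2 = eq_class (NX \<gamma> \<delta>) (N_rel \<gamma>) p2"
  have "p2 \<in> c2" unfolding c2_def eq_class_def using p2X N_rel_refl by blast
  moreover have "p2 \<notin> c1" unfolding c1_def eq_class_def using notrel by blast
  ultimately have c12: "c1 \<noteq> c2" by blast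
  have top: "topspace (N_top \<gamma> \<delta>) = eq_class (NX \<gamma> \<delta>) (N_rel \<gamma>) ` topspace (NX \<gamma> \<delta>)"
    unfolding N_top_def topspace_quot ..
  have "inj_on (N_imm \<gamma>) (topspace (N_top \<gamma> \<delta>))"
    using emb unfolding embedding_map_def by (rule homeomorphic_imp_injective_map)
  moreover have "c1 \<in> topspace (N_top \<gamma> \<delta>)" "c2 \<in> topspace (N_top \<gamma> \<delta>)"
    unfolding top c1_def c2_def using p1X p2X by blast+
  moreover have "N_imm \<gamma> c1 = N_imm \<gamma> c2"
    unfolding c1_def c2_def N_imm_class[OF p1X] N_imm_class[OF p2X] by (rule img)
  ultimately show False using c12 unfolding inj_on_def by blast
qed



lemma sin_int_pi: "sin (of_int j * pi) = 0"
  using sin_zero_iff_int2 by blast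

lemma cos_int_pi_sq: "cos (of_int j * pi) * cos (of_int j * pi) = 1"
  using sin_cos_squared_add[of "of_int j * pi"] sin_int_pi[of j] by (simp add: power2_eq_square)

lemma cis_int_pi: "cis (of_int j * pi) = complex_of_real (cos (of_int j * pi))"
  by (simp add: complex_eq_iff sin_int_pi)

lemma cos_int_pi_add: "cos (of_int (j + l) * pi) = cos (of_int j * pi) * cos (of_int l * pi)"
  by (simp add: distrib_right cos_add sin_int_pi)

lemma dual_equal:
  fixes \<gamma> :: "real^'m"
  assumes eq: "\<forall>k. \<gamma>$k = a"
  shows "x \<in> dual_lattice (gen_lattice \<gamma>) \<longleftrightarrow> a * x \<in> \<int>"
proof
  assume "x \<in> dual_lattice (gen_lattice \<gamma>)"
  then show "a * x \<in> \<int>" using gen_lattice_mem[of \<gamma> undefined] eq unfolding dual_lattice_def by auto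
next
  assume ax: "a * x \<in> \<int>"
  show "x \<in> dual_lattice (gen_lattice \<gamma>)" unfolding dual_lattice_def
  proof (intro CollectI ballI)
    fix l assume "l \<in> gen_lattice \<gamma>"
    then obtain c :: "'m \<Rightarrow> int" where "l = (\<Sum>k\<in>UNIV. of_int (c k) * \<gamma>$k)" unfolding gen_lattice_def by blast
    then have "l = of_int (\<Sum>k\<in>UNIV. c k) * a" using eq by (simp add: sum_distrib_right)
    then have 1: "l * x = of_int (\<Sum>k\<in>UNIV. c k) * (a * x)" by simp
    have "of_int (\<Sum>k\<in>UNIV. c k) * (a * x) \<in> \<int>" by (rule Ints_mult[OF Ints_of_int ax])
    then show "l * x \<in> \<int>" using 1 by (simp only:)
  qed
qed

lemma N_rel_equal:
  fixes \<gamma> :: "real^'m"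
  assumes eq: "\<forall>k. \<gamma>$k = a" and a0: "a \<noteq> 0"
  shows "N_rel \<gamma> (u,\<phi>) (u',\<phi>') \<longleftrightarrow> (\<exists>j::int. \<phi>' = \<phi> + of_int j / (2*a) \<and> u' = cos (of_int j * pi) *\<^sub>R u)"
proof
  assume "N_rel \<gamma> (u,\<phi>) (u',\<phi>')"
  then obtain \<psi> where d: "2 * \<psi> \<in> dual_lattice (gen_lattice \<gamma>)"
    and e: "(\<chi> k. complex_of_real (u'$k)) = torus_act \<gamma> \<psi> u" and f: "\<phi>' = \<phi> + \<psi>"
    unfolding N_rel_def by auto
  have "a * (2 * \<psi>) \<in> \<int>" using d dual_equal[OF eq] by blast
  then obtain j where j: "a * (2 * \<psi>) = of_int j" by (auto elim: Ints_cases)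
  have psi: "\<psi> = of_int j / (2 * a)" using j a0 by (simp add: field_simps)
  have ang: "2 * pi * a * \<psi> = of_int j * pi" using j by (simp add: algebra_simps)
  have "u' = cos (of_int j * pi) *\<^sub>R u" unfolding vec_eq_iff
  proof
    fix k
    have "complex_of_real (u'$k) = cis (2 * pi * a * \<psi>) * complex_of_real (u$k)"
      using arg_cong[OF e, of "\<lambda>v. v$k"] eq by (simp add: torus_act_def)
    also have "\<dots> = complex_of_real (cos (of_int j * pi) * u$k)" unfolding ang cis_int_pi by simp
    finally have "u'$k = cos (of_int j * pi) * u$k" by (simp only: of_real_eq_iff)
    then show "u'$k = (cos (of_int j * pi) *\<^sub>R u)$k" by simp
  qed
  then show "\<exists>j::int. \<phi>' = \<phi> + of_int j / (2*a) \<and> u' = cos (of_int j * pi) *\<^sub>R u"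
    using f psi by blast
next
  assume "\<exists>j::int. \<phi>' = \<phi> + of_int j / (2*a) \<and> u' = cos (of_int j * pi) *\<^sub>R u"
  then obtain j :: int where f: "\<phi>' = \<phi> + of_int j / (2*a)" and e: "u' = cos (of_int j * pi) *\<^sub>R u" by blast
  define \<psi> where "\<psi> = of_int j / (2*a)"
  have "a * (2 * \<psi>) = of_int j" unfolding \<psi>_def using a0 by simp
  then have d: "2 * \<psi> \<in> dual_lattice (gen_lattice \<gamma>)" using dual_equal[OF eq] by simp
  have ang: "2 * pi * a * \<psi> = of_int j * pi" unfolding \<psi>_def using a0 by simp
  have "(\<chi> k. complex_of_real (u'$k)) = torus_act \<gamma> \<psi> u" unfolding vec_eq_iff
  proof
    fix k
    have t: "torus_act \<gamma> \<psi> u $ k = cis (2 * pi * a * \<psi>) * complex_of_real (u$k)"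
      using eq by (simp add: torus_act_def)
    show "(\<chi> k. complex_of_real (u'$k)) $ k = torus_act \<gamma> \<psi> u $ k"
      unfolding t ang cis_int_pi using e by simp
  qed
  then show "N_rel \<gamma> (u,\<phi>) (u',\<phi>')" unfolding N_rel_def using d f \<psi>_def by auto
qed



lemma NX_eq: "NX \<gamma> \<delta> = top_of_set (R_set \<gamma> \<delta> \<times> UNIV)"
proof -
  have "top_of_set (R_set \<gamma> \<delta> \<times> UNIV) = NX \<gamma> \<delta>"
    using subtopology_Times[of euclidean euclidean "R_set \<gamma> \<delta>" UNIV] by simp
  then show ?thesis by (rule sym)
qed

lemma N_rel_sym_equal:
  fixes \<gamma> :: "real^'m"
  assumes eq: "\<forall>k. \<gamma>$k = a" and a0: "a \<noteq> 0" and r: "N_rel \<gamma> p q"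
  shows "N_rel \<gamma> q p"
proof -
  obtain u \<phi> u' \<phi>' where pq: "p = (u,\<phi>)" "q = (u',\<phi>')" by fastforce
  obtain j :: int where j: "\<phi>' = \<phi> + of_int j / (2*a)" "u' = cos (of_int j * pi) *\<^sub>R u"
    using r unfolding pq N_rel_equal[OF eq a0] by blast
  have "\<phi> = \<phi>' + of_int (-j) / (2*a)" using j(1) by simp
  moreover have "u = cos (of_int (-j) * pi) *\<^sub>R u'"
    using j(2) cos_int_pi_sq[of j] by (simp add: scaleR_scaleR)
  ultimately show ?thesis unfolding pq N_rel_equal[OF eq a0] by blast
qed

lemma N_rel_trans_equal:
  fixes \<gamma> :: "real^'m"
  assumes eq: "\<forall>k. \<gamma>$k = a" and a0: "a \<noteq> 0" and r: "N_rel \<gamma> p q" "N_rel \<gamma> q w"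
  shows "N_rel \<gamma> p w"
proof -
  obtain u \<phi> where p: "p = (u,\<phi>)" by fastforce
  obtain u' \<phi>' where q: "q = (u',\<phi>')" by fastforce
  obtain u'' \<phi>'' where w: "w = (u'',\<phi>'')" by fastforce
  note pq = p q w
  obtain j :: int where j: "\<phi>' = \<phi> + of_int j / (2*a)" "u' = cos (of_int j * pi) *\<^sub>R u"
    using r(1) unfolding pq N_rel_equal[OF eq a0] by blast
  obtain l :: int where l: "\<phi>'' = \<phi>' + of_int l / (2*a)" "u'' = cos (of_int l * pi) *\<^sub>R u'"
    using r(2) unfolding pq N_rel_equal[OF eq a0] by blast
  have "\<phi>'' = \<phi> + of_int (j + l) / (2*a)" using j(1) l(1) by (simp add: add_divide_distrib)
  moreover have "u'' = cos (of_int (j + l) * pi) *\<^sub>R u"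
    using j(2) l(2) unfolding cos_int_pi_add by (simp add: scaleR_scaleR mult.commute)
  ultimately show ?thesis unfolding pq N_rel_equal[OF eq a0] by blast
qed

lemma eq_class_N_equal:
  fixes \<gamma> :: "real^'m"
  assumes eq: "\<forall>k. \<gamma>$k = a" and a0: "a \<noteq> 0"
    and p: "p \<in> topspace (NX \<gamma> \<delta>)" and q: "q \<in> topspace (NX \<gamma> \<delta>)" and r: "N_rel \<gamma> p q"
  shows "eq_class (NX \<gamma> \<delta>) (N_rel \<gamma>) p = eq_class (NX \<gamma> \<delta>) (N_rel \<gamma>) q"
proof (rule eq_class_eq)
  fix x y assume "x \<in> topspace (NX \<gamma> \<delta>)" "y \<in> topspace (NX \<gamma> \<delta>)" "N_rel \<gamma> x y"
  then show "N_rel \<gamma> y x" using N_rel_sym_equal[OF eq a0] by blast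
next
  fix x y z assume "x \<in> topspace (NX \<gamma> \<delta>)" "y \<in> topspace (NX \<gamma> \<delta>)" "z \<in> topspace (NX \<gamma> \<delta>)"
    "N_rel \<gamma> x y" "N_rel \<gamma> y z"
  then show "N_rel \<gamma> x z" using N_rel_trans_equal[OF eq a0] by blast
qed (rule p, rule q, rule r)

lemma cos_2int_pi: "cos (of_int (2 * j) * pi) = 1"
proof -
  have "(2 * j) = j + j" by simp
  then have "cos (of_int (2 * j) * pi) = cos (of_int j * pi) * cos (of_int j * pi)"
    using cos_int_pi_add[of j j] by (simp only:)
  then show ?thesis using cos_int_pi_sq[of j] by (simp only:)
qed

lemma cont_torus:
  "continuous_map (NX \<gamma> \<delta>) euclidean (\<lambda>p. torus_act \<gamma> (snd p) (fst p))"
  unfolding NX_eq continuous_map_iff_continuous torus_act_def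
  by (intro continuous_intros)

lemma compact_N_equal:
  fixes \<gamma> :: "real^'m"
  assumes eq: "\<forall>k. \<gamma>$k = a" and a0: "a \<noteq> 0" and cpt: "compact (R_set \<gamma> \<delta>)"
  shows "compact_space (N_top \<gamma> \<delta>)"
  unfolding N_top_def
proof (rule compact_space_quot)
  show "compactin (NX \<gamma> \<delta>) (R_set \<gamma> \<delta> \<times> cball 0 (1 / \<bar>a\<bar>))"
    unfolding NX_eq compactin_subtopology compactin_euclidean_iff
    using compact_Times[OF cpt compact_cball] by auto
next
  fix p assume p: "p \<in> topspace (NX \<gamma> \<delta>)"
  obtain u \<phi> where pp: "p = (u, \<phi>)" by fastforce
  define j where "j = - floor (\<phi> * a)"
  define \<phi>' where "\<phi>' = \<phi> + of_int (2 * j) / (2 * a)"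
  have r: "N_rel \<gamma> (u,\<phi>) (u,\<phi>')"
    unfolding N_rel_equal[OF eq a0] \<phi>'_def
    using cos_2int_pi[of j] by (intro exI[of _ "2 * j"] conjI refl) simp
  have "\<phi>' = (\<phi> * a + of_int j) / a" unfolding \<phi>'_def using a0 by (simp add: field_simps)
  moreover have "0 \<le> \<phi> * a + of_int j" "\<phi> * a + of_int j \<le> 1" unfolding j_def
    by linarith+
  ultimately have "\<bar>\<phi>'\<bar> \<le> 1 / \<bar>a\<bar>" using a0 by (simp add: abs_div divide_right_mono)
  then have m: "(u, \<phi>') \<in> R_set \<gamma> \<delta> \<times> cball 0 (1 / \<bar>a\<bar>)" using p pp by auto
  then have m': "(u, \<phi>') \<in> topspace (NX \<gamma> \<delta>)" by simp
  have "N_rel \<gamma> (u,\<phi>') (u,\<phi>)" using N_rel_sym_equal[OF eq a0 r] .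
  then have "eq_class (NX \<gamma> \<delta>) (N_rel \<gamma>) (u,\<phi>') = eq_class (NX \<gamma> \<delta>) (N_rel \<gamma>) p"
    unfolding pp by (rule eq_class_N_equal[OF eq a0 m' p[unfolded pp]])
  with m show "\<exists>y\<in>R_set \<gamma> \<delta> \<times> cball 0 (1 / \<bar>a\<bar>). eq_class (NX \<gamma> \<delta>) (N_rel \<gamma>) y = eq_class (NX \<gamma> \<delta>) (N_rel \<gamma>) p"
    by blast
qed



lemma cis_cancel: "cis A * x = cis B * y \<Longrightarrow> y = cis (A - B) * x"
proof -
  assume h: "cis A * x = cis B * y"
  have "y = cis (-B) * (cis B * y)" by (simp add: cis_mult)
  also have "\<dots> = cis (-B) * (cis A * x)" using h by simp
  also have "\<dots> = cis (A - B) * x" by (simp add: cis_mult mult.assoc[symmetric])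
  finally show ?thesis .
qed

lemma torus_inj_equal:
  fixes \<gamma> :: "real^'m"
  assumes eq: "\<forall>k. \<gamma>$k = a" and a0: "a \<noteq> 0" and nondeg: "\<delta> \<noteq> 0"
    and p: "p \<in> topspace (NX \<gamma> \<delta>)" and q: "q \<in> topspace (NX \<gamma> \<delta>)"
    and e: "torus_act \<gamma> (snd p) (fst p) = torus_act \<gamma> (snd q) (fst q)"
  shows "N_rel \<gamma> p q"
proof -
  obtain u1 \<phi>1 where pp: "p = (u1,\<phi>1)" by fastforce
  obtain u2 \<phi>2 where qq: "q = (u2,\<phi>2)" by fastforce
  define \<theta> where "\<theta> = 2 * pi * a * \<phi>1 - 2 * pi * a * \<phi>2"
  have comp: "complex_of_real (u2$i) = cis \<theta> * complex_of_real (u1$i)" for i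
  proof -
    have "cis (2 * pi * a * \<phi>1) * complex_of_real (u1$i) = cis (2 * pi * a * \<phi>2) * complex_of_real (u2$i)"
      using arg_cong[OF e, of "\<lambda>v. v$i"] eq unfolding pp qq by (simp add: torus_act_def)
    then show ?thesis unfolding \<theta>_def by (rule cis_cancel)
  qed
  obtain i0 where i0: "u1$i0 \<noteq> 0"
  proof (rule ccontr)
    assume "\<not> thesis"
    then have "\<forall>i. u1$i = 0" using that by blast
    moreover have "(\<Sum>k\<in>UNIV. \<gamma>$k * (u1$k)^2) = \<delta>" using p unfolding pp by (simp add: R_set_def)
    ultimately show False using nondeg by simp
  qed
  have "Im (complex_of_real (u2$i0)) = Im (cis \<theta> * complex_of_real (u1$i0))" using comp[of i0] by simp
  then have "sin \<theta> * u1$i0 = 0" by simp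
  then have "sin \<theta> = 0" using i0 by simp
  then obtain m :: int where m: "\<theta> = of_int m * pi" using sin_zero_iff_int2 by blast
  have ph: "\<phi>2 = \<phi>1 + of_int (-m) / (2*a)"
  proof -
    have "2 * pi * a * (\<phi>1 - \<phi>2) = of_int m * pi" using m unfolding \<theta>_def by (simp add: algebra_simps)
    then have "2 * a * (\<phi>1 - \<phi>2) = of_int m" by (simp add: mult.commute mult.left_commute)
    then show ?thesis using a0 by (simp add: field_simps)
  qed
  have "u2 = cos (of_int (-m) * pi) *\<^sub>R u1" unfolding vec_eq_iff
  proof
    fix i
    have "complex_of_real (u2$i) = complex_of_real (cos (of_int m * pi)) * complex_of_real (u1$i)"
      using comp[of i] unfolding m cis_int_pi .
    then have "u2$i = cos (of_int m * pi) * u1$i" by (metis of_real_mult of_real_eq_iff)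
    then show "u2$i = (cos (of_int (-m) * pi) *\<^sub>R u1)$i" by simp
  qed
  then show ?thesis unfolding pp qq N_rel_equal[OF eq a0] using ph by blast
qed

lemma embedding_equal:
  fixes \<gamma> :: "real^'m"
  assumes eq: "\<forall>k. \<gamma>$k = a" and a0: "a \<noteq> 0" and nondeg: "\<delta> \<noteq> 0" and cpt: "compact (R_set \<gamma> \<delta>)"
  shows "embedding_map (N_top \<gamma> \<delta>) (euclidean :: (complex^'m) topology) (N_imm \<gamma>)"
proof (rule continuous_imp_embedding_map)
  show "continuous_map (N_top \<gamma> \<delta>) euclidean (N_imm \<gamma>)"
    unfolding N_imm_lift N_top_def
  proof (rule continuous_map_lift[OF cont_torus N_rel_refl])
    fix x y assume "N_rel \<gamma> x y"
    then show "torus_act \<gamma> (snd y) (fst y) = torus_act \<gamma> (snd x) (fst x)"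
      using torus_act_resp[of \<gamma> "fst x" "snd x" "fst y" "snd y"] by simp
  qed
  show "compact_space (N_top \<gamma> \<delta>)" by (rule compact_N_equal[OF eq a0 cpt])
  show "Hausdorff_space (euclidean :: (complex^'m) topology)" by simp
  show "inj_on (N_imm \<gamma>) (topspace (N_top \<gamma> \<delta>))"
  proof (rule inj_onI)
    fix c1 c2 assume c1: "c1 \<in> topspace (N_top \<gamma> \<delta>)" and c2: "c2 \<in> topspace (N_top \<gamma> \<delta>)"
      and e: "N_imm \<gamma> c1 = N_imm \<gamma> c2"
    obtain p where p: "p \<in> topspace (NX \<gamma> \<delta>)" "c1 = eq_class (NX \<gamma> \<delta>) (N_rel \<gamma>) p"
      using c1 unfolding N_top_def topspace_quot by blast
    obtain q where q: "q \<in> topspace (NX \<gamma> \<delta>)" "c2 = eq_class (NX \<gamma> \<delta>) (N_rel \<gamma>) q"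
      using c2 unfolding N_top_def topspace_quot by blast
    have "torus_act \<gamma> (snd p) (fst p) = torus_act \<gamma> (snd q) (fst q)"
      using e unfolding p(2) q(2) N_imm_class[OF p(1)] N_imm_class[OF q(1)] .
    then have "N_rel \<gamma> p q" by (rule torus_inj_equal[OF eq a0 nondeg p(1) q(1)])
    then show "c1 = c2" unfolding p(2) q(2) by (rule eq_class_N_equal[OF eq a0 p(1) q(1)])
  qed
qed



definition sqs :: "real^'m \<Rightarrow> real" where "sqs x = (\<Sum>i\<in>UNIV. (x$i)^2)"

lemma norm_sqs: "(norm x)^2 = sqs x"
  unfolding power2_norm_eq_inner inner_vec_def sqs_def by (simp add: power2_eq_square)

lemma R_set_equal:
  fixes \<gamma> :: "real^'m"
  assumes eq: "\<forall>k. \<gamma>$k = a"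
  shows "u \<in> R_set \<gamma> \<delta> \<longleftrightarrow> a * sqs u = \<delta>"
  unfolding R_set_def sqs_def using eq by (simp add: sum_distrib_left)

definition pairing :: "('m \<Rightarrow> 'm) \<Rightarrow> ('m \<Rightarrow> real) \<Rightarrow> bool" where
  "pairing \<sigma> s \<longleftrightarrow> (\<forall>i. \<sigma> (\<sigma> i) = i) \<and> (\<forall>i. s (\<sigma> i) = - s i) \<and> (\<forall>i. s i = 0 \<or> s i = 1 \<or> s i = -1)"

definition rot :: "('m \<Rightarrow> 'm) \<Rightarrow> ('m \<Rightarrow> real) \<Rightarrow> real \<Rightarrow> real^'m \<Rightarrow> real^'m" where
  "rot \<sigma> s \<theta> x = (\<chi> i. (1 - (s i)^2 * (1 - cos \<theta>)) * x$i + sin \<theta> * s i * x$(\<sigma> i))"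

lemma rot_comp: "rot \<sigma> s \<theta> x $ i = (1 - (s i)^2 * (1 - cos \<theta>)) * x$i + sin \<theta> * s i * x$(\<sigma> i)"
  by (simp add: rot_def)

lemma cs_id: "cos t * (cos t * y) + sin t * (sin t * y) = (y::real)"
proof -
  have "cos t * (cos t * y) + sin t * (sin t * y) = (cos t * cos t + sin t * sin t) * y" by (simp only: distrib_right mult.assoc)
  also have "cos t * cos t + sin t * sin t = 1" using sin_cos_squared_add[of t] by (simp add: power2_eq_square)
  finally show ?thesis by simp
qed

lemma rot_inv:
  assumes P: "pairing \<sigma> s"
  shows "rot \<sigma> s \<theta> (rot \<sigma> s (-\<theta>) x) = x"
  unfolding vec_eq_iff
proof
  fix i
  have ss: "\<sigma> (\<sigma> i) = i" and sn: "s (\<sigma> i) = - s i" and sv: "s i = 0 \<or> s i = 1 \<or> s i = -1"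
    using P unfolding pairing_def by auto
  have sc: "(sin \<theta>)^2 + (cos \<theta>)^2 = 1" by (rule sin_cos_squared_add)
  show "rot \<sigma> s \<theta> (rot \<sigma> s (-\<theta>) x) $ i = x $ i"
    using sv
  proof (elim disjE)
    assume "s i = 0" then show ?thesis by (simp add: rot_comp)
  next
    assume s1: "s i = 1"
    show ?thesis by (simp add: rot_comp ss sn s1 algebra_simps cs_id)
  next
    assume s1: "s i = -1"
    show ?thesis by (simp add: rot_comp ss sn s1 algebra_simps cs_id)
  qed
qed

lemma rot_inv': "pairing \<sigma> s \<Longrightarrow> rot \<sigma> s (-\<theta>) (rot \<sigma> s \<theta> x) = x"
  using rot_inv[of \<sigma> s "-\<theta>" x] by simp

lemma rot_scale: "rot \<sigma> s \<theta> (c *\<^sub>R x) = c *\<^sub>R rot \<sigma> s \<theta> x"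
  unfolding vec_eq_iff by (simp add: rot_comp algebra_simps)

lemma rot_zero: "rot \<sigma> s 0 x = x"
  unfolding vec_eq_iff by (simp add: rot_comp)

lemma sum_invol:
  assumes "\<forall>i. \<sigma> (\<sigma> i) = i"
  shows "(\<Sum>i\<in>UNIV. f (\<sigma> i)) = (\<Sum>i\<in>(UNIV::'m::finite set). f i)"
  by (rule sum.reindex_bij_witness[where i=\<sigma> and j=\<sigma>]) (use assms in auto)

lemma sqs_rot:
  assumes P: "pairing \<sigma> s"
  shows "sqs (rot \<sigma> s \<theta> x) = sqs x"
proof -
  have ss: "\<And>i. \<sigma> (\<sigma> i) = i" and sn: "\<And>i. s (\<sigma> i) = - s i" and sv: "\<And>i. s i = 0 \<or> s i = 1 \<or> s i = -1"
    using P unfolding pairing_def by auto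
  define c where "c i = 1 - (s i)^2 * (1 - cos \<theta>)" for i
  have c1: "(c i)^2 + (sin \<theta>)^2 * (s i)^2 = 1" for i
    using sv[of i] sin_cos_squared_add[of \<theta>] by (auto simp: c_def power2_eq_square algebra_simps)
  have cs: "c i * s i = cos \<theta> * s i" for i
    using sv[of i] by (auto simp: c_def power2_eq_square)
  have sq: "(rot \<sigma> s \<theta> x $ i)^2 = (c i)^2 * (x$i)^2 + (sin \<theta>)^2 * ((s i)^2 * (x$(\<sigma> i))^2)
      + 2 * cos \<theta> * sin \<theta> * (s i * x$i * x$(\<sigma> i))" for i
  proof -
    have "(rot \<sigma> s \<theta> x $ i)^2 = (c i * x$i + sin \<theta> * s i * x$(\<sigma> i))^2" by (simp add: rot_comp c_def)
    also have "\<dots> = (c i)^2 * (x$i)^2 + (sin \<theta>)^2 * ((s i)^2 * (x$(\<sigma> i))^2)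
      + 2 * sin \<theta> * (c i * s i) * x$i * x$(\<sigma> i)" by (simp add: power2_eq_square algebra_simps)
    finally show ?thesis unfolding cs by (simp add: algebra_simps)
  qed
  define A where "A = (\<Sum>i\<in>UNIV. s i * x$i * x$(\<sigma> i))"
  have "A = (\<Sum>i\<in>UNIV. s (\<sigma> i) * x$(\<sigma> i) * x$(\<sigma> (\<sigma> i)))"
    unfolding A_def by (rule sum_invol[symmetric]) (simp add: ss)
  also have "\<dots> = - A" unfolding A_def by (simp add: ss sn sum_negf algebra_simps)
  finally have A0: "A = 0" by simp
  have B: "(\<Sum>i\<in>UNIV. (s i)^2 * (x$(\<sigma> i))^2) = (\<Sum>i\<in>UNIV. (s i)^2 * (x$i)^2)"
  proof -
    have "(\<Sum>i\<in>UNIV. (s i)^2 * (x$(\<sigma> i))^2) = (\<Sum>i\<in>UNIV. (s (\<sigma> i))^2 * (x$(\<sigma> i))^2)"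
      by (simp add: sn)
    also have "\<dots> = (\<Sum>i\<in>UNIV. (s i)^2 * (x$i)^2)" by (rule sum_invol) (simp add: ss)
    finally show ?thesis .
  qed
  have "sqs (rot \<sigma> s \<theta> x) = (\<Sum>i\<in>UNIV. (c i)^2 * (x$i)^2) + (sin \<theta>)^2 * (\<Sum>i\<in>UNIV. (s i)^2 * (x$(\<sigma> i))^2)
      + 2 * cos \<theta> * sin \<theta> * A"
    unfolding sqs_def sq A_def by (simp add: sum.distrib sum_distrib_left)
  also have "\<dots> = (\<Sum>i\<in>UNIV. ((c i)^2 + (sin \<theta>)^2 * (s i)^2) * (x$i)^2)"
    unfolding A0 B by (simp add: sum.distrib sum_distrib_left algebra_simps)
  also have "\<dots> = sqs x" unfolding c1 sqs_def by simp
  finally show ?thesis .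
qed

lemma norm_rot: "pairing \<sigma> s \<Longrightarrow> norm (rot \<sigma> s \<theta> x) = norm x"
  using sqs_rot[of \<sigma> s \<theta> x] norm_sqs[of x] norm_sqs[of "rot \<sigma> s \<theta> x"]
  by (metis norm_ge_zero power2_eq_imp_eq)

lemma rot_add_pi:
  assumes nz: "\<forall>i. s i \<noteq> 0" and sv: "\<forall>i. s i = 0 \<or> s i = 1 \<or> s i = -1"
  shows "rot \<sigma> s (\<theta> + of_int j * pi) x = cos (of_int j * pi) *\<^sub>R rot \<sigma> s \<theta> x"
  unfolding vec_eq_iff
proof
  fix i
  have "(s i)^2 = 1" using nz sv by (metis power2_minus one_power2)
  then show "rot \<sigma> s (\<theta> + of_int j * pi) x $ i = (cos (of_int j * pi) *\<^sub>R rot \<sigma> s \<theta> x) $ i"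
    by (simp add: rot_comp cos_add sin_add sin_int_pi algebra_simps)
qed

lemma rot_pi: "\<forall>i. s i = 0 \<or> s i = 1 \<or> s i = -1 \<Longrightarrow> rot \<sigma> s pi x = (\<chi> i. if s i = 0 then x$i else - x$i)"
  unfolding vec_eq_iff by (auto simp: rot_comp) 

lemma cont_rot [continuous_intros]:
  fixes S :: "'a::t2_space set"
  shows "continuous_on S f \<Longrightarrow> continuous_on S g \<Longrightarrow> continuous_on S (\<lambda>p. rot \<sigma> s (f p) (g p))"
  unfolding rot_def by (intro continuous_intros)



definition tau :: "nat \<Rightarrow> nat \<Rightarrow> nat" where
  "tau m n = (if even n then (if n + 1 < m then n + 1 else n) else n - 1)"
definition sp :: "nat \<Rightarrow> nat \<Rightarrow> real" where
  "sp m n = (if even n then (if n + 1 < m then 1 else 0) else -1)"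

lemma tau_lt: "n < m \<Longrightarrow> tau m n < m" unfolding tau_def by auto
lemma tau_tau: "n < m \<Longrightarrow> tau m (tau m n) = n" unfolding tau_def by auto
lemma sp_tau: "n < m \<Longrightarrow> sp m (tau m n) = - sp m n" unfolding tau_def sp_def by auto
lemma sp_vals: "sp m n = 0 \<or> sp m n = 1 \<or> sp m n = -1" unfolding sp_def by auto

lemma pairing_exists:
  fixes k0 :: "'m::finite"
  obtains \<sigma> s where "pairing \<sigma> (s :: 'm \<Rightarrow> real)" "\<forall>i. (s i = 0) \<longleftrightarrow> (odd CARD('m) \<and> i = k0)"
proof -
  define m where "m = CARD('m)"
  have m1: "m \<ge> 1" unfolding m_def by (simp add: Suc_le_eq card_gt_0_iff)
  obtain e0 where e0: "bij_betw e0 (UNIV::'m set) {0..<m}"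
    using ex_bij_betw_finite_nat[of "UNIV::'m set"] unfolding m_def by auto
  have e0k: "e0 k0 < m" using e0 by (auto simp: bij_betw_def)
  define w where "w n = (if n = e0 k0 then m - 1 else if n = m - 1 then e0 k0 else n)" for n
  have ww: "w (w n) = n" for n unfolding w_def by auto
  have wr: "n < m \<Longrightarrow> w n < m" for n unfolding w_def using e0k m1 by auto
  have wb: "bij_betw w {0..<m} {0..<m}"
    by (rule bij_betw_byWitness[where f'=w]) (use ww wr in auto)
  define e where "e = w \<circ> e0"
  have eb: "bij_betw e (UNIV::'m set) {0..<m}" unfolding e_def by (rule bij_betw_trans[OF e0 wb])
  have ek: "e k0 = m - 1" unfolding e_def w_def by simp
  have elt: "e i < m" for i using eb by (auto simp: bij_betw_def)
  have einj: "inj e" using eb by (simp add: bij_betw_def)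
  define d where "d = inv_into UNIV e"
  have de: "d (e i) = i" for i unfolding d_def using einj by (simp add: inv_into_f_f)
  have ed: "n < m \<Longrightarrow> e (d n) = n" for n unfolding d_def using eb
    by (simp add: bij_betw_inv_into_right)
  define \<sigma> where "\<sigma> i = d (tau m (e i))" for i
  define s where "s i = sp m (e i)" for i
  have "pairing \<sigma> s" unfolding pairing_def
  proof (intro conjI allI)
    fix i
    show "\<sigma> (\<sigma> i) = i" unfolding \<sigma>_def using ed[OF tau_lt[OF elt[of i]]] tau_tau[OF elt[of i]] de by simp
    show "s (\<sigma> i) = - s i" unfolding \<sigma>_def s_def using ed[OF tau_lt[OF elt[of i]]] sp_tau[OF elt[of i]] by simp
    show "s i = 0 \<or> s i = 1 \<or> s i = -1" unfolding s_def by (rule sp_vals)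
  qed
  moreover have "(s i = 0) \<longleftrightarrow> (odd CARD('m) \<and> i = k0)" for i
  proof -
    have "(s i = 0) \<longleftrightarrow> even (e i) \<and> \<not> (e i + 1 < m)" unfolding s_def sp_def by auto
    also have "\<dots> \<longleftrightarrow> e i = m - 1 \<and> odd m" using elt[of i] m1 by auto presburger+
    also have "\<dots> \<longleftrightarrow> i = k0 \<and> odd m" using ek einj by (metis injD)
    finally show ?thesis unfolding m_def by auto
  qed
  ultimately show ?thesis using that by blast
qed



lemma norm_R:
  fixes \<gamma> :: "real^'m"
  assumes eq: "\<forall>k. \<gamma>$k = a" and a0: "a \<noteq> 0" and pos: "\<delta> / a > 0"
  shows "u \<in> R_set \<gamma> \<delta> \<longleftrightarrow> norm u = sqrt (\<delta> / a)"
proof -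
  have "u \<in> R_set \<gamma> \<delta> \<longleftrightarrow> sqs u = \<delta> / a" unfolding R_set_equal[OF eq] using a0 by (auto simp: field_simps)
  also have "\<dots> \<longleftrightarrow> sqrt (sqs u) = sqrt (\<delta> / a)" by (rule real_sqrt_eq_iff[symmetric])
  also have "sqrt (sqs u) = norm u" unfolding norm_sqs[symmetric] by simp
  finally show ?thesis .
qed

lemma prod_top_sets: "prod_topology (top_of_set A) (top_of_set B) = top_of_set (A \<times> B)"
  using subtopology_Times[of euclidean euclidean A B] by simp

lemma cis_eq_int:
  assumes "cis A = cis B" shows "\<exists>n::int. A = B + of_int n * (2 * pi)"
proof -
  have "cis (A - B) = 1" using assms by (metis cis_cancel mult_1_right)
  then have "cos (A - B) = 1" by (metis cis.sel(1) one_complex.sel(1))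
  then obtain n :: int where "A - B = of_int n * 2 * pi" using cos_one_2pi_int by blast
  then show ?thesis by (intro exI[of _ n]) (simp add: algebra_simps)
qed



lemma N_imm_cont: "continuous_map (N_top \<gamma> \<delta>) euclidean (N_imm \<gamma>)"
  unfolding N_imm_lift N_top_def
proof (rule continuous_map_lift[OF cont_torus N_rel_refl])
  fix x y assume "N_rel \<gamma> x y"
  then show "torus_act \<gamma> (snd y) (fst y) = torus_act \<gamma> (snd x) (fst x)"
    using torus_act_resp[of \<gamma> "fst x" "snd x" "fst y" "snd y"] by simp
qed

lemma even_homeo:
  fixes \<gamma> :: "real^'m" and \<sigma> :: "'m \<Rightarrow> 'm" and s :: "'m \<Rightarrow> real"
  assumes eq: "\<forall>k. \<gamma>$k = a" and a0: "a \<noteq> 0" and pos: "\<delta> / a > 0" and cpt: "compact (R_set \<gamma> \<delta>)"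
    and P: "pairing \<sigma> s" and nz: "\<forall>i. s i \<noteq> 0"
  shows "N_top \<gamma> \<delta> homeomorphic_space
           prod_topology (top_of_set (sphere (0::real^'m) 1)) (top_of_set (sphere (0::complex) 1))"
proof -
  define r where "r = sqrt (\<delta> / a)"
  have r0: "r > 0" unfolding r_def using pos by simp
  have R: "\<And>u. u \<in> R_set \<gamma> \<delta> \<longleftrightarrow> norm u = r" unfolding r_def by (rule norm_R[OF eq a0 pos])
  have sv: "\<forall>i. s i = 0 \<or> s i = 1 \<or> s i = -1" using P unfolding pairing_def by auto
  define G where "G p = (rot \<sigma> s (2*pi*a* snd p) ((1/r) *\<^sub>R fst p), cis (4*pi*a* snd p))" for p :: "(real^'m) \<times> real"
  define T where "T = prod_topology (top_of_set (sphere (0::real^'m) 1)) (top_of_set (sphere (0::complex) 1))"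
  have T_eq: "T = top_of_set (sphere 0 1 \<times> sphere 0 1)" unfolding T_def by (rule prod_top_sets)
  have Grange: "G p \<in> sphere 0 1 \<times> sphere 0 1" if "p \<in> R_set \<gamma> \<delta> \<times> UNIV" for p
  proof -
    obtain u \<phi> where p: "p = (u,\<phi>)" by fastforce
    have "u \<in> R_set \<gamma> \<delta>" using that p by simp
    then have nu: "norm u = r" using R by blast
    have "norm ((1/r) *\<^sub>R u) = 1" using nu r0 by simp
    then have "norm (rot \<sigma> s (2*pi*a*\<phi>) ((1/r) *\<^sub>R u)) = 1" by (simp only: norm_rot[OF P])
    then have "rot \<sigma> s (2*pi*a*\<phi>) ((1/r) *\<^sub>R u) \<in> sphere 0 1" by simp
    moreover have "cis (4*pi*a*\<phi>) \<in> sphere 0 1" by simp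
    ultimately show ?thesis unfolding G_def p by simp
  qed
  have Gcont: "continuous_map (NX \<gamma> \<delta>) T G"
    unfolding NX_eq T_eq continuous_map_subtopology_eu
  proof
    show "continuous_on (R_set \<gamma> \<delta> \<times> UNIV) G" unfolding G_def by (intro continuous_intros)
    show "G \<in> R_set \<gamma> \<delta> \<times> UNIV \<rightarrow> sphere 0 1 \<times> sphere 0 1" using Grange by blast
  qed
  have Gresp: "G q = G p" if rel: "N_rel \<gamma> p q" for p q
  proof -
    obtain u \<phi> where p: "p = (u,\<phi>)" by fastforce
    obtain u' \<phi>' where q: "q = (u',\<phi>')" by fastforce
    obtain j :: int where j: "\<phi>' = \<phi> + of_int j / (2*a)" "u' = cos (of_int j * pi) *\<^sub>R u"
      using rel unfolding p q N_rel_equal[OF eq a0] by blast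
    have th: "2*pi*a*\<phi>' = 2*pi*a*\<phi> + of_int j * pi" unfolding j(1) using a0 by (simp add: field_simps)
    have c4: "4*pi*a*\<phi>' = 4*pi*a*\<phi> + 2 * pi * of_int j" unfolding j(1) using a0 by (simp add: field_simps)
    have "rot \<sigma> s (2*pi*a*\<phi>') ((1/r) *\<^sub>R u') = (cos (of_int j * pi) * cos (of_int j * pi)) *\<^sub>R rot \<sigma> s (2*pi*a*\<phi>) ((1/r) *\<^sub>R u)"
      unfolding th rot_add_pi[OF nz sv] j(2) by (simp add: rot_scale)
    also have "\<dots> = rot \<sigma> s (2*pi*a*\<phi>) ((1/r) *\<^sub>R u)" unfolding cos_int_pi_sq by simp
    finally have 1: "rot \<sigma> s (2*pi*a*\<phi>') ((1/r) *\<^sub>R u') = rot \<sigma> s (2*pi*a*\<phi>) ((1/r) *\<^sub>R u)" .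
    have 2: "cis (4*pi*a*\<phi>') = cis (4*pi*a*\<phi>)" unfolding c4 by (simp add: cis_mult[symmetric])
    show ?thesis unfolding p q G_def using 1 2 by simp
  qed
  have Ginj: "N_rel \<gamma> p q" if eqG: "G p = G q" for p q
  proof -
    obtain u1 \<phi>1 where p: "p = (u1,\<phi>1)" by fastforce
    obtain u2 \<phi>2 where q: "q = (u2,\<phi>2)" by fastforce
    have e1: "rot \<sigma> s (2*pi*a*\<phi>1) ((1/r) *\<^sub>R u1) = rot \<sigma> s (2*pi*a*\<phi>2) ((1/r) *\<^sub>R u2)"
      and e2: "cis (4*pi*a*\<phi>1) = cis (4*pi*a*\<phi>2)" using eqG unfolding p q G_def by auto
    obtain n :: int where n: "4*pi*a*\<phi>1 = 4*pi*a*\<phi>2 + of_int n * (2 * pi)" using cis_eq_int[OF e2] by blast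
    define j where "j = - n"
    have h: "(2*pi) * (2*a*\<phi>1) = (2*pi) * (2*a*\<phi>2 + of_int n)" using n by (simp add: algebra_simps)
    then have h2: "2*a*\<phi>1 = 2*a*\<phi>2 + of_int n" by simp
    have ph: "\<phi>2 = \<phi>1 + of_int j / (2*a)" using h2 a0 unfolding j_def by (simp add: field_simps; linarith)
    have th: "2*pi*a*\<phi>2 = 2*pi*a*\<phi>1 + of_int j * pi" unfolding ph using a0 by (simp add: field_simps)
    have "rot \<sigma> s (2*pi*a*\<phi>1) ((1/r) *\<^sub>R u1) = cos (of_int j * pi) *\<^sub>R rot \<sigma> s (2*pi*a*\<phi>1) ((1/r) *\<^sub>R u2)"
      using e1 unfolding th rot_add_pi[OF nz sv] .
    then have "rot \<sigma> s (-(2*pi*a*\<phi>1)) (rot \<sigma> s (2*pi*a*\<phi>1) ((1/r) *\<^sub>R u1))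
        = rot \<sigma> s (-(2*pi*a*\<phi>1)) (rot \<sigma> s (2*pi*a*\<phi>1) ((cos (of_int j * pi) / r) *\<^sub>R u2))"
      by (simp add: rot_scale)
    then have "(1/r) *\<^sub>R u1 = (cos (of_int j * pi) / r) *\<^sub>R u2" unfolding rot_inv'[OF P] .
    then have "r *\<^sub>R ((1/r) *\<^sub>R u1) = r *\<^sub>R ((cos (of_int j * pi) / r) *\<^sub>R u2)" by simp
    then have "u1 = cos (of_int j * pi) *\<^sub>R u2" using r0 by simp
    then have "cos (of_int j * pi) *\<^sub>R u1 = (cos (of_int j * pi) * cos (of_int j * pi)) *\<^sub>R u2" by simp
    then have "u2 = cos (of_int j * pi) *\<^sub>R u1" unfolding cos_int_pi_sq by simp
    then show ?thesis unfolding p q N_rel_equal[OF eq a0] using ph by blast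
  qed
  define F where "F = lift G"
  have Fcl: "F (eq_class (NX \<gamma> \<delta>) (N_rel \<gamma>) p) = G p" if "p \<in> topspace (NX \<gamma> \<delta>)" for p
    unfolding F_def by (rule lift_class[OF that N_rel_refl Gresp])
  have "homeomorphic_map (N_top \<gamma> \<delta>) T F"
  proof (rule continuous_imp_homeomorphic_map)
    show "continuous_map (N_top \<gamma> \<delta>) T F"
      unfolding N_top_def F_def by (rule continuous_map_lift[OF Gcont N_rel_refl Gresp])
    show "compact_space (N_top \<gamma> \<delta>)" by (rule compact_N_equal[OF eq a0 cpt])
    show "Hausdorff_space T" unfolding T_eq by (rule Hausdorff_space_subtopology) simp
    show "F ` topspace (N_top \<gamma> \<delta>) = topspace T"
    proof
      show "F ` topspace (N_top \<gamma> \<delta>) \<subseteq> topspace T"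
      proof
        fix y assume "y \<in> F ` topspace (N_top \<gamma> \<delta>)"
        then obtain p where p: "p \<in> topspace (NX \<gamma> \<delta>)" "y = F (eq_class (NX \<gamma> \<delta>) (N_rel \<gamma>) p)"
          unfolding N_top_def topspace_quot by blast
        have "y = G p" using p Fcl by simp
        then show "y \<in> topspace T" unfolding T_eq using Grange p(1) by simp
      qed
      show "topspace T \<subseteq> F ` topspace (N_top \<gamma> \<delta>)"
      proof
        fix y assume "y \<in> topspace T"
        then obtain v z where y: "y = (v,z)" and v: "norm v = 1" and z: "norm z = 1" unfolding T_eq by auto
        define \<alpha> where "\<alpha> = Arg z"
        have z0: "z \<noteq> 0" using z by auto
        have "cis \<alpha> = sgn z" unfolding \<alpha>_def by (rule cis_Arg[OF z0])
        also have "sgn z = z" using z by (simp add: sgn_div_norm)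
        finally have za: "cis \<alpha> = z" .
        define \<phi> where "\<phi> = \<alpha> / (4*pi*a)"
        define u where "u = r *\<^sub>R rot \<sigma> s (-(2*pi*a*\<phi>)) v"
        have uR: "u \<in> R_set \<gamma> \<delta>" unfolding R u_def using r0 v by (simp add: norm_rot[OF P])
        have "G (u,\<phi>) = (v, z)"
          unfolding G_def u_def using r0 a0 za by (simp add: rot_inv[OF P] \<phi>_def)
        moreover have "(u,\<phi>) \<in> topspace (NX \<gamma> \<delta>)" using uR by simp
        ultimately show "y \<in> F ` topspace (N_top \<gamma> \<delta>)"
          unfolding y N_top_def topspace_quot using Fcl by (metis image_eqI)
      qed
    qed
    show "inj_on F (topspace (N_top \<gamma> \<delta>))"
    proof (rule inj_onI)
      fix c1 c2 assume c1: "c1 \<in> topspace (N_top \<gamma> \<delta>)" and c2: "c2 \<in> topspace (N_top \<gamma> \<delta>)"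
        and e: "F c1 = F c2"
      obtain p where p: "p \<in> topspace (NX \<gamma> \<delta>)" "c1 = eq_class (NX \<gamma> \<delta>) (N_rel \<gamma>) p"
        using c1 unfolding N_top_def topspace_quot by blast
      obtain q where q: "q \<in> topspace (NX \<gamma> \<delta>)" "c2 = eq_class (NX \<gamma> \<delta>) (N_rel \<gamma>) q"
        using c2 unfolding N_top_def topspace_quot by blast
      have "G p = G q" using e unfolding p(2) q(2) Fcl[OF p(1)] Fcl[OF q(1)] .
      then have "N_rel \<gamma> p q" by (rule Ginj)
      then show "c1 = c2" unfolding p(2) q(2) by (rule eq_class_N_equal[OF eq a0 p(1) q(1)])
    qed
  qed
  then show ?thesis unfolding T_def by (rule homeomorphic_map_imp_homeomorphic_space)
qed



definition Krel :: "('a \<Rightarrow> 'a) \<Rightarrow> ('a \<times> real) \<Rightarrow> ('a \<times> real) \<Rightarrow> bool" where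
  "Krel f = (\<lambda>(x,t) (y,s). (x,t) = (y,s) \<or> (t = 0 \<and> s = 1 \<and> y = f x) \<or> (t = 1 \<and> s = 0 \<and> x = f y))"

lemma klein_eq: "klein_bottle = quotient_topology (top_of_set (sphere 0 1 \<times> {0..1})) (Krel reflection_map)"
  unfolding klein_bottle_def mapping_torus_def Krel_def prod_top_sets ..

lemma inner_ax: "x \<bullet> axis k (1::real) = x$k"
  by (simp add: inner_axis)

lemma refl_comp: "reflection_map x $ i = (if i = (SOME k. True) then - x$i else x$i)"
  unfolding reflection_map_def Let_def inner_ax by (simp add: axis_def)

lemma refl_refl: "reflection_map (reflection_map x) = x"
  unfolding vec_eq_iff by (simp add: refl_comp)

lemma Krel_sym: "(\<And>x. f (f x) = x) \<Longrightarrow> Krel f p q \<Longrightarrow> Krel f q p"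
  by (cases p; cases q) (auto simp: Krel_def)

lemma Krel_trans: "(\<And>x. f (f x) = x) \<Longrightarrow> Krel f p q \<Longrightarrow> Krel f q w \<Longrightarrow> Krel f p w"
  by (cases p; cases q; cases w) (auto simp: Krel_def dest: arg_cong[where f=f])

lemma Krel_refl: "Krel f p p"
  by (cases p) (auto simp: Krel_def)

lemma eq_class_K:
  assumes "p \<in> topspace X" "q \<in> topspace X" "Krel reflection_map p q"
  shows "eq_class X (Krel reflection_map) p = eq_class X (Krel reflection_map) q"
proof (rule eq_class_eq)
  fix x y assume "Krel reflection_map x y" then show "Krel reflection_map y x"
    by (rule Krel_sym[OF refl_refl])
next
  fix x y z assume "Krel reflection_map x y" "Krel reflection_map y z"
  then show "Krel reflection_map x z" by (rule Krel_trans[OF refl_refl])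
qed (use assms in auto)

lemma rot_pi_refl:
  assumes P: "pairing \<sigma> s" and z: "\<forall>i. s i = 0 \<longleftrightarrow> i = (SOME k. True)"
  shows "rot \<sigma> s pi (reflection_map x) = - x"
proof -
  have sv: "\<forall>i. s i = 0 \<or> s i = 1 \<or> s i = -1" using P unfolding pairing_def by auto
  show ?thesis unfolding rot_pi[OF sv] vec_eq_iff using z by (auto simp: refl_comp)
qed



lemma N_class_rel:
  assumes "q \<in> topspace (NX \<gamma> \<delta>)"
    and "eq_class (NX \<gamma> \<delta>) (N_rel \<gamma>) p = eq_class (NX \<gamma> \<delta>) (N_rel \<gamma>) q"
  shows "N_rel \<gamma> p q"
proof -
  have "q \<in> eq_class (NX \<gamma> \<delta>) (N_rel \<gamma>) q" unfolding eq_class_def using assms(1) N_rel_refl by blast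
  then have "q \<in> eq_class (NX \<gamma> \<delta>) (N_rel \<gamma>) p" using assms(2) by simp
  then show ?thesis unfolding eq_class_def by blast
qed

lemma abs_cos_int_pi: "\<bar>cos (of_int j * pi)\<bar> = 1"
  using cos_int_pi_sq[of j] by (metis abs_square_eq_1 power2_eq_square)

lemma norm_refl: "norm (reflection_map x) = norm x"
proof -
  have "sqs (reflection_map x) = sqs x" unfolding sqs_def by (rule sum.cong) (simp_all add: refl_comp)
  then show ?thesis using norm_sqs[of x] norm_sqs[of "reflection_map x"] by (metis norm_ge_zero power2_eq_imp_eq)
qed

lemma odd_homeo:
  fixes \<gamma> :: "real^'m" and \<sigma> :: "'m \<Rightarrow> 'm" and s :: "'m \<Rightarrow> real"
  assumes eq: "\<forall>k. \<gamma>$k = a" and a0: "a \<noteq> 0" and pos: "\<delta> / a > 0" and cpt: "compact (R_set \<gamma> \<delta>)"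
    and nondeg: "\<delta> \<noteq> 0"
    and P: "pairing \<sigma> s" and z: "\<forall>i. s i = 0 \<longleftrightarrow> i = (SOME k. True)"
  shows "N_top \<gamma> \<delta> homeomorphic_space (klein_bottle :: ((real^'m) \<times> real) set topology)"
proof -
  define r where "r = sqrt (\<delta> / a)"
  have r0: "r > 0" unfolding r_def using pos by simp
  have R: "\<And>u. u \<in> R_set \<gamma> \<delta> \<longleftrightarrow> norm u = r" unfolding r_def by (rule norm_R[OF eq a0 pos])
  define f :: "real^'m \<Rightarrow> real^'m" where "f = reflection_map"
  define KX where "KX = top_of_set (sphere (0::real^'m) 1 \<times> {0..1::real})"
  define hK where "hK p = (r *\<^sub>R rot \<sigma> s (pi * snd p) (fst p), snd p / (2*a))" for p :: "(real^'m) \<times> real"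
  define G where "G p = eq_class (NX \<gamma> \<delta>) (N_rel \<gamma>) (hK p)" for p
  have hKr: "hK p \<in> topspace (NX \<gamma> \<delta>)" if "p \<in> topspace KX" for p
  proof -
    obtain x t where p: "p = (x,t)" by fastforce
    have "norm x = 1" using that unfolding p KX_def by simp
    then have "norm (r *\<^sub>R rot \<sigma> s (pi * t) x) = r" using r0 by (simp add: norm_rot[OF P])
    then show ?thesis unfolding hK_def p using R by simp
  qed
  have hKc: "continuous_map KX (NX \<gamma> \<delta>) hK"
    unfolding KX_def NX_eq continuous_map_subtopology_eu
  proof
    show "continuous_on (sphere 0 1 \<times> {0..1}) hK" unfolding hK_def using a0 by (intro continuous_intros) auto
    show "hK \<in> sphere 0 1 \<times> {0..1} \<rightarrow> R_set \<gamma> \<delta> \<times> UNIV"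
      using hKr unfolding KX_def NX_eq by auto
  qed
  have Gc: "continuous_map KX (N_top \<gamma> \<delta>) G"
    unfolding G_def N_top_def using continuous_map_compose[OF hKc continuous_map_class]
    by (simp add: o_def)
  have key: "G (f x, 1) = G (x, 0)" if x: "norm x = 1" for x
  proof -
    have fx: "norm (f x) = 1" using x unfolding f_def by (simp add: norm_refl)
    have e1: "hK (f x, 1) = (- (r *\<^sub>R x), 1 / (2*a))"
      unfolding hK_def f_def using rot_pi_refl[OF P z, of x] by (simp add: rot_scale)
    have e0: "hK (x, 0) = (r *\<^sub>R x, 0)" unfolding hK_def by (simp add: rot_zero)
    have m1: "hK (f x, 1) \<in> topspace (NX \<gamma> \<delta>)" by (rule hKr) (use fx in \<open>simp add: KX_def\<close>)
    have m0: "hK (x, 0) \<in> topspace (NX \<gamma> \<delta>)" by (rule hKr) (use x in \<open>simp add: KX_def\<close>)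
    have rel: "N_rel \<gamma> (hK (x, 0)) (hK (f x, 1))"
      unfolding e0 e1 N_rel_equal[OF eq a0] by (intro exI[of _ 1]) simp
    show ?thesis unfolding G_def using eq_class_N_equal[OF eq a0 m0 m1 rel] by simp
  qed
  have Gresp: "G q = G p" if "p \<in> topspace KX" "q \<in> topspace KX" "Krel reflection_map p q" for p q
  proof -
    obtain x t where p: "p = (x,t)" by fastforce
    obtain y u where q: "q = (y,u)" by fastforce
    have nx: "norm x = 1" and ny: "norm y = 1" using that(1,2) unfolding p q KX_def by auto
    have "(x,t) = (y,u) \<or> (t = 0 \<and> u = 1 \<and> y = f x) \<or> (t = 1 \<and> u = 0 \<and> x = f y)"
      using that(3) unfolding p q Krel_def f_def by simp
    then show ?thesis
    proof (elim disjE conjE)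
      assume "(x,t) = (y,u)" then show ?thesis unfolding p q by simp
    next
      assume "t = 0" "u = 1" "y = f x" then show ?thesis unfolding p q using key[OF nx] by simp
    next
      assume "t = 1" "u = 0" "x = f y" then show ?thesis unfolding p q using key[OF ny] by simp
    qed
  qed
  define H where "H = lift G"
  have Hcl: "H (eq_class KX (Krel reflection_map) p) = G p" if "p \<in> topspace KX" for p
    unfolding H_def using Gresp[OF that] by (intro lift_class[OF that Krel_refl]) blast
  have emb: "embedding_map (N_top \<gamma> \<delta>) (euclidean :: (complex^'m) topology) (N_imm \<gamma>)"
    by (rule embedding_equal[OF eq a0 nondeg cpt])
  have injN: "inj_on (N_imm \<gamma>) (topspace (N_top \<gamma> \<delta>))"
    using emb unfolding embedding_map_def by (rule homeomorphic_imp_injective_map)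
  have HausN: "Hausdorff_space (N_top \<gamma> \<delta>)"
    by (rule Hausdorff_space_injective_preimage[OF Hausdorff_space_euclidean N_imm_cont injN])
  have "homeomorphic_map (quotient_topology KX (Krel reflection_map)) (N_top \<gamma> \<delta>) H"
  proof (rule continuous_imp_homeomorphic_map)
    show "continuous_map (quotient_topology KX (Krel reflection_map)) (N_top \<gamma> \<delta>) H"
      unfolding H_def by (rule continuous_map_lift[OF Gc Krel_refl Gresp])
    show "compact_space (quotient_topology KX (Krel reflection_map))"
    proof (rule compact_space_quot)
      show "compactin KX (topspace KX)" unfolding KX_def compactin_subtopology compactin_euclidean_iff
        using compact_Times[OF compact_sphere compact_Icc] by simp
    qed blast
    show "Hausdorff_space (N_top \<gamma> \<delta>)" by (rule HausN)
    show "H ` topspace (quotient_topology KX (Krel reflection_map)) = topspace (N_top \<gamma> \<delta>)"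
    proof
      show "H ` topspace (quotient_topology KX (Krel reflection_map)) \<subseteq> topspace (N_top \<gamma> \<delta>)"
      proof
        fix y assume "y \<in> H ` topspace (quotient_topology KX (Krel reflection_map))"
        then obtain p where p: "p \<in> topspace KX" "y = H (eq_class KX (Krel reflection_map) p)"
          unfolding topspace_quot by blast
        have "y = G p" using p Hcl by simp
        then show "y \<in> topspace (N_top \<gamma> \<delta>)" unfolding G_def N_top_def topspace_quot using hKr[OF p(1)] by blast
      qed
      show "topspace (N_top \<gamma> \<delta>) \<subseteq> H ` topspace (quotient_topology KX (Krel reflection_map))"
      proof
        fix c assume "c \<in> topspace (N_top \<gamma> \<delta>)"
        then obtain u \<phi> where up: "(u,\<phi>) \<in> topspace (NX \<gamma> \<delta>)" "c = eq_class (NX \<gamma> \<delta>) (N_rel \<gamma>) (u,\<phi>)"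
          unfolding N_top_def topspace_quot by auto
        have nu: "norm u = r" using up(1) R by simp
        define j where "j = floor (2 * a * \<phi>)"
        define t where "t = 2 * a * \<phi> - of_int j"
        have t01: "0 \<le> t" "t \<le> 1" unfolding t_def j_def by linarith+
        define u' where "u' = cos (of_int (-j) * pi) *\<^sub>R u"
        define x where "x = rot \<sigma> s (-(pi * t)) ((1/r) *\<^sub>R u')"
        have nu': "norm u' = r" unfolding u'_def using nu abs_cos_int_pi[of "-j"] by simp
        have nx: "norm x = 1" unfolding x_def using nu' r0 by (simp add: norm_rot[OF P])
        have xK: "(x,t) \<in> topspace KX" unfolding KX_def using nx t01 by simp
        have hx: "hK (x,t) = (u', t / (2*a))" unfolding hK_def x_def using r0 by (simp add: rot_inv[OF P])
        have tp: "t / (2*a) = \<phi> + of_int (-j) / (2*a)" unfolding t_def using a0 by (simp add: field_simps)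
        have rel: "N_rel \<gamma> (u,\<phi>) (hK (x,t))" unfolding hx N_rel_equal[OF eq a0] tp u'_def by blast
        have Gc: "G (x,t) = c" unfolding G_def up(2)
          using eq_class_N_equal[OF eq a0 up(1) hKr[OF xK] rel] by simp
        have mem: "eq_class KX (Krel reflection_map) (x,t) \<in> topspace (quotient_topology KX (Krel reflection_map))"
          unfolding topspace_quot using xK by blast
        show "c \<in> H ` topspace (quotient_topology KX (Krel reflection_map))"
          by (rule image_eqI[OF _ mem]) (simp add: Hcl[OF xK] Gc)
      qed
    qed
    show "inj_on H (topspace (quotient_topology KX (Krel reflection_map)))"
    proof (rule inj_onI)
      fix c1 c2 assume c1: "c1 \<in> topspace (quotient_topology KX (Krel reflection_map))"
        and c2: "c2 \<in> topspace (quotient_topology KX (Krel reflection_map))" and e: "H c1 = H c2"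
      obtain p where p: "p \<in> topspace KX" "c1 = eq_class KX (Krel reflection_map) p"
        using c1 unfolding topspace_quot by blast
      obtain q where q: "q \<in> topspace KX" "c2 = eq_class KX (Krel reflection_map) q"
        using c2 unfolding topspace_quot by blast
      obtain x1 t1 where pp: "p = (x1,t1)" by fastforce
      obtain x2 t2 where qq: "q = (x2,t2)" by fastforce
      have t1: "0 \<le> t1" "t1 \<le> 1" and t2: "0 \<le> t2" "t2 \<le> 1" using p(1) q(1) unfolding pp qq KX_def by auto
      have "G p = G q" using e unfolding p(2) q(2) Hcl[OF p(1)] Hcl[OF q(1)] .
      then have "N_rel \<gamma> (hK p) (hK q)" unfolding G_def by (rule N_class_rel[OF hKr[OF q(1)], rotated])
      then obtain j :: int where j1: "t2 / (2*a) = t1 / (2*a) + of_int j / (2*a)"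
          and j2: "r *\<^sub>R rot \<sigma> s (pi * t2) x2 = cos (of_int j * pi) *\<^sub>R (r *\<^sub>R rot \<sigma> s (pi * t1) x1)"
        unfolding pp qq hK_def N_rel_equal[OF eq a0] by auto
      have tj: "t2 = t1 + of_int j" using j1 a0 by (simp add: field_simps)
      have j2': "rot \<sigma> s (pi * t2) x2 = cos (of_int j * pi) *\<^sub>R rot \<sigma> s (pi * t1) x1"
      proof -
        have "r *\<^sub>R rot \<sigma> s (pi * t2) x2 = r *\<^sub>R (cos (of_int j * pi) *\<^sub>R rot \<sigma> s (pi * t1) x1)"
          using j2 by (simp add: scaleR_scaleR mult.commute)
        then have "rot \<sigma> s (pi * t2) x2 = cos (of_int j * pi) *\<^sub>R rot \<sigma> s (pi * t1) x1 \<or> r = 0"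
          by (simp only: scaleR_cancel_left)
        then show ?thesis using r0 by simp
      qed
      have "j = 0 \<or> j = 1 \<or> j = -1" using tj t1 t2 by linarith
      then have "Krel reflection_map p q"
      proof (elim disjE)
        assume j0: "j = 0"
        then have "rot \<sigma> s (pi * t1) x2 = rot \<sigma> s (pi * t1) x1" using j2' tj by simp
        then have "rot \<sigma> s (-(pi * t1)) (rot \<sigma> s (pi * t1) x2) = rot \<sigma> s (-(pi * t1)) (rot \<sigma> s (pi * t1) x1)" by simp
        then have "x2 = x1" by (simp only: rot_inv'[OF P])
        then show ?thesis unfolding pp qq Krel_def using tj j0 by simp
      next
        assume j0: "j = 1"
        then have "t1 = 0" "t2 = 1" using tj t1 t2 by linarith+
        then have "rot \<sigma> s pi x2 = - x1" using j2' j0 by (simp add: rot_zero)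
        moreover have "rot \<sigma> s pi x2 = - reflection_map x2"
          using rot_pi_refl[OF P z, of "reflection_map x2"] by (simp add: refl_refl)
        ultimately have "- reflection_map x2 = - x1" by simp
        then have h: "reflection_map x2 = x1" by simp
        have "x2 = reflection_map (reflection_map x2)" by (simp only: refl_refl)
        then have "x2 = reflection_map x1" using h by simp
        then show ?thesis unfolding pp qq Krel_def using \<open>t1 = 0\<close> \<open>t2 = 1\<close> by simp
      next
        assume j0: "j = -1"
        then have "t1 = 1" "t2 = 0" using tj t1 t2 by linarith+
        then have "x2 = - rot \<sigma> s pi x1" using j2' j0 by (simp add: rot_zero)
        moreover have "rot \<sigma> s pi x1 = - reflection_map x1"
          using rot_pi_refl[OF P z, of "reflection_map x1"] by (simp add: refl_refl)
        ultimately have "x1 = reflection_map x2" by (simp add: refl_refl)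
        then show ?thesis unfolding pp qq Krel_def using \<open>t1 = 1\<close> \<open>t2 = 0\<close> by simp
      qed
      then show "c1 = c2" unfolding p(2) q(2) by (rule eq_class_K[OF p(1) q(1)])
    qed
  qed
  then have "quotient_topology KX (Krel reflection_map) homeomorphic_space N_top \<gamma> \<delta>"
    by (rule homeomorphic_map_imp_homeomorphic_space)
  then show ?thesis unfolding klein_eq KX_def by (rule homeomorphic_space_sym[THEN iffD1])
qed



theorem proposition12p8:
  fixes \<gamma> :: "real^'m" and \<delta> :: real
  assumes cone: "\<exists>c::'m \<Rightarrow> real. (\<forall>k. c k \<ge> 0) \<and> \<delta> = (\<Sum>k\<in>UNIV. c k * \<gamma>$k)"
    and nondeg: "\<delta> \<noteq> 0"
    and lattice: "\<exists>g. g \<noteq> 0 \<and> gen_lattice \<gamma> = range (\<lambda>j::int. of_int j * g)"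
    and cpt: "compact (R_set \<gamma> \<delta>)"
  shows "(embedding_map (N_top \<gamma> \<delta>) (euclidean :: (complex^'m) topology) (N_imm \<gamma>)
            \<longleftrightarrow> (\<forall>k l. \<gamma>$k = \<gamma>$l))
       \<and> ((\<forall>k l. \<gamma>$k = \<gamma>$l) \<longrightarrow>
            (if even CARD('m)
             then N_top \<gamma> \<delta> homeomorphic_space
                    prod_topology (top_of_set (sphere (0::real^'m) 1)) (top_of_set (sphere (0::complex) 1))
             else N_top \<gamma> \<delta> homeomorphic_space (klein_bottle :: ((real^'m) \<times> real) set topology)))"
proof (cases "\<forall>k l. \<gamma>$k = \<gamma>$l")
  case False
  then show ?thesis using not_embedding[OF cone nondeg lattice cpt False] by blast
next
  case True
  define k0 where "k0 = (SOME k::'m. True)"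
  define a where "a = \<gamma>$k0"
  have eq: "\<forall>k. \<gamma>$k = a" unfolding a_def using True by blast
  have sg: "a * \<delta> > 0" unfolding a_def using sign_lemma[OF cone nondeg cpt] .
  have a0: "a \<noteq> 0" using sg by auto
  have pos: "\<delta> / a > 0" using sg by (auto simp: zero_less_divide_iff zero_less_mult_iff)
  have emb: "embedding_map (N_top \<gamma> \<delta>) (euclidean :: (complex^'m) topology) (N_imm \<gamma>)"
    by (rule embedding_equal[OF eq a0 nondeg cpt])
  obtain \<sigma> :: "'m \<Rightarrow> 'm" and s :: "'m \<Rightarrow> real" where P: "pairing \<sigma> s"
    and z: "\<forall>i. (s i = 0) \<longleftrightarrow> (odd CARD('m) \<and> i = k0)"
    using pairing_exists[of k0] by blast
  have top: "if even CARD('m)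
             then N_top \<gamma> \<delta> homeomorphic_space
                    prod_topology (top_of_set (sphere (0::real^'m) 1)) (top_of_set (sphere (0::complex) 1))
             else N_top \<gamma> \<delta> homeomorphic_space (klein_bottle :: ((real^'m) \<times> real) set topology)"
  proof (cases "even CARD('m)")
    case True
    have nz: "\<forall>i. s i \<noteq> 0" using z True by blast
    show ?thesis using True even_homeo[OF eq a0 pos cpt P nz] by simp
  next
    case False
    have z': "\<forall>i. s i = 0 \<longleftrightarrow> i = (SOME k. True)" using z False unfolding k0_def by blast
    show ?thesis using False odd_homeo[OF eq a0 pos cpt nondeg P z'] by simp
  qed
  show ?thesis using emb True top by blast
qed

end
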